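(* Let $C$ be a convex subset of the Euclidean plane $\mathbb{R}^2$ (not necessarily closed or bounded). Then for every finite point set $P \subset \mathbb{R}^2$, the straight-line drawing of $G_{t}(P,C)$ is a plane graph.
   Context: For a finite set $P \subset \mathbb{R}^2$ and a set $C \subseteq \mathbb{R}^2$, $G_{t}(P,C)$ is the graph with vertex set $P$ in which two distinct points $u,v \in P$ are adjacent if and only if there is a translate $C+\mathbf{v} = \{x+\mathbf{v} : x \in C\}$ (for some $\mathbf{v}\in\mathbb{R}^2$) with $P \cap (C+\mathbf{v}) = \{u,v\}$. The graph is drawn with each vertex at its point and each edge as the closed straight-line segment between its endpoints. A drawing is a plane graph if (1) no vertex lies on an edge of which it is not an endpoint, and (2) no two edges cross, i.e., two edges may intersect only at a common endpoint. *)

theory Defs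
  imports "HOL-Analysis.Analysis"
begin

definition translate_adj :: "(real \<times> real) set \<Rightarrow> (real \<times> real) set \<Rightarrow> real \<times> real \<Rightarrow> real \<times> real \<Rightarrow> bool" where
  "translate_adj P C u v \<longleftrightarrow>
     u \<in> P \<and> v \<in> P \<and> u \<noteq> v \<and> (\<exists>w. P \<inter> ((\<lambda>x. x + w) ` C) = {u, v})"

definition plane_straight_line :: "(real \<times> real) set \<Rightarrow> (real \<times> real \<Rightarrow> real \<times> real \<Rightarrow> bool) \<Rightarrow> bool" where
  "plane_straight_line P E \<longleftrightarrow>
     (\<forall>u v z. E u v \<and> z \<in> P \<and> z \<noteq> u \<and> z \<noteq> v \<longrightarrow> z \<notin> closed_segment u v) \<and>
     (\<forall>u v x y. E u v \<and> E x y \<and> {u, v} \<noteq> {x, y} \<longrightarrow>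
        closed_segment u v \<inter> closed_segment x y \<subseteq> {u, v} \<inter> {x, y})"

end

theory Submission imports Defs begin

lemma conv3:
  assumes "convex K" "a \<in> K" "b \<in> K" "c \<in> K" "0 \<le> l1" "0 \<le> l2" "0 \<le> l3" "l1 + l2 + l3 = 1"
  shows "l1 *\<^sub>R a + l2 *\<^sub>R b + l3 *\<^sub>R c \<in> K"
proof -
  have "convex hull {a,b,c} \<subseteq> K" using assms by (intro hull_minimal) auto
  moreover have "l1 *\<^sub>R a + l2 *\<^sub>R b + l3 *\<^sub>R c \<in> convex hull {a,b,c}"
    unfolding convex_hull_3 using assms by blast
  ultimately show ?thesis by blast
qed

lemma core:
  fixes p U X t :: "real \<times> real"
  assumes K: "convex K" and u: "p + U \<in> K" and v: "p - c *\<^sub>R U \<in> K"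
    and x: "p + X - t \<in> K" and y: "p - k *\<^sub>R X - t \<in> K"
    and c: "c > 0" and k: "k > 0" and t: "t = a *\<^sub>R X + b *\<^sub>R U" and a: "a \<ge> 0" and b: "b \<ge> 0"
  shows "p - k *\<^sub>R X \<in> K \<or> p + U - t \<in> K"
proof (cases "k * b \<le> a")
  case True
  define D where "D = (k + a) * (1 + c)"
  have D: "D > 0" unfolding D_def using k a c by simp
  define l1 where "l1 = k * (1 + c) / D"
  define l3 where "l3 = (a - k * b) / D"
  define l2 where "l2 = (a * c + k * b) / D"
  have l3: "l3 \<ge> 0" unfolding l3_def using True D by simp
  have l2: "l2 \<ge> 0" unfolding l2_def using D c a k b by simp
  have l1: "l1 \<ge> 0" unfolding l1_def using k D c by simp
  have "l1 + l2 + l3 = (k * (1 + c) + (a * c + k * b) + (a - k * b)) / D"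
    unfolding l1_def l2_def l3_def by (simp only: add_divide_distrib)
  also have "k * (1 + c) + (a * c + k * b) + (a - k * b) = D" unfolding D_def by algebra
  finally have s: "l1 + l2 + l3 = 1" using D by simp
  have "l1 * (k + a) = (k * (1 + c) * (k + a)) / D" unfolding l1_def by simp
  also have "k * (1 + c) * (k + a) = k * D" unfolding D_def by algebra
  finally have e1: "l1 * (k + a) = k" using D by simp
  have "l2 - l1 * b - l3 * c = ((a * c + k * b) - k * (1 + c) * b - (a - k * b) * c) / D"
    unfolding l1_def l2_def l3_def using D by (simp add: field_simps)
  also have "(a * c + k * b) - k * (1 + c) * b - (a - k * b) * c = 0" by algebra
  finally have e2: "l2 - l1 * b - l3 * c = 0" by simp
  have "l1 *\<^sub>R (p - k *\<^sub>R X - t) + l2 *\<^sub>R (p + U) + l3 *\<^sub>R (p - c *\<^sub>R U)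
     = (l1 + l2 + l3) *\<^sub>R p - (l1 * (k + a)) *\<^sub>R X + (l2 - l1 * b - l3 * c) *\<^sub>R U"
    unfolding t by (simp add: algebra_simps)
  also have "\<dots> = p - k *\<^sub>R X" using s e1 e2 by simp
  finally have "p - k *\<^sub>R X = l1 *\<^sub>R (p - k *\<^sub>R X - t) + l2 *\<^sub>R (p + U) + l3 *\<^sub>R (p - c *\<^sub>R U)" by simp
  then show ?thesis using conv3[OF K y u v l1 l2 l3 s] by simp
next
  case False
  define D where "D = (1 + b) * (1 + k)"
  have D: "D > 0" unfolding D_def using k b by simp
  define l1 where "l1 = (1 + k) / D"
  define l3 where "l3 = (a + b) / D"
  define l2 where "l2 = (b * k - a) / D"
  have l3: "l3 \<ge> 0" unfolding l3_def using D a b by simp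
  have l2: "l2 \<ge> 0" unfolding l2_def using False D by (simp add: mult.commute)
  have l1: "l1 \<ge> 0" unfolding l1_def using D k by simp
  have "l1 + l2 + l3 = ((1 + k) + (b * k - a) + (a + b)) / D"
    unfolding l1_def l2_def l3_def by (simp only: add_divide_distrib)
  also have "(1 + k) + (b * k - a) + (a + b) = D" unfolding D_def by algebra
  finally have s: "l1 + l2 + l3 = 1" using D by simp
  have "1 - l1 - l1 * b = (D - (1 + k) - (1 + k) * b) / D"
    unfolding l1_def using D by (simp add: field_simps)
  also have "D - (1 + k) - (1 + k) * b = 0" unfolding D_def by algebra
  finally have e1: "1 - l1 - l1 * b = 0" by simp
  have "l2 - k * l3 + l1 * a = ((b * k - a) - k * (a + b) + (1 + k) * a) / D"
    unfolding l1_def l2_def l3_def using D by (simp add: field_simps)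
  also have "(b * k - a) - k * (a + b) + (1 + k) * a = 0" by algebra
  finally have e2: "l2 - k * l3 = - l1 * a" by simp
  have "l1 *\<^sub>R (p + U) + l2 *\<^sub>R (p + X - t) + l3 *\<^sub>R (p - k *\<^sub>R X - t)
     = (l1 + l2 + l3) *\<^sub>R p + (l2 - k * l3 - (l2 + l3) * a) *\<^sub>R X + (l1 - (l2 + l3) * b) *\<^sub>R U"
    unfolding t by (simp add: algebra_simps)
  also have "\<dots> = p + U - t"
  proof -
    have h: "l2 + l3 = 1 - l1" using s by simp
    have f1: "l2 - k * l3 - (l2 + l3) * a = - a" unfolding h using e2 by (simp add: algebra_simps)
    have f2: "l1 - (l2 + l3) * b = 1 - b" unfolding h using e1 by (simp add: algebra_simps)
    show ?thesis unfolding f1 f2 s t by (simp add: algebra_simps)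
  qed
  finally have "p + U - t = l1 *\<^sub>R (p + U) + l2 *\<^sub>R (p + X - t) + l3 *\<^sub>R (p - k *\<^sub>R X - t)" by simp
  then show ?thesis using conv3[OF K u x y l1 l2 l3 s] by simp
qed

lemma core2:
  fixes p u v x y t :: "real \<times> real"
  assumes K: "convex K" and "u \<in> K" "v \<in> K" "x - t \<in> K" "y - t \<in> K"
    and hv: "v - p = - c *\<^sub>R (u - p)" and hy: "y - p = - k *\<^sub>R (x - p)"
    and "c > 0" "k > 0" and ht: "t = a *\<^sub>R (x - p) + b *\<^sub>R (u - p)" and "a \<ge> 0" "b \<ge> 0"
  shows "y \<in> K \<or> u - t \<in> K"
proof -
  have e: "p + (u - p) = u" "p - c *\<^sub>R (u - p) = v" "p + (x - p) - t = x - t"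
    "p - k *\<^sub>R (x - p) - t = y - t" "p - k *\<^sub>R (x - p) = y" "p + (u - p) - t = u - t"
    using hv hy by (auto simp: algebra_simps)
  show ?thesis using core[of K p "u - p" c "x - p" t k a b] assms unfolding e by auto
qed

lemma col:
  fixes p u x t :: "real \<times> real"
  assumes K: "convex K" and p: "p \<in> K" and pt: "p - t \<in> K" and u: "u \<in> K" and x: "x - t \<in> K"
    and h: "x - p = r *\<^sub>R (u - p)" and r: "r > 0"
  shows "x \<in> K \<or> u - t \<in> K"
proof (cases "r \<le> 1")
  case True
  have "(1 - r) *\<^sub>R p + r *\<^sub>R u \<in> K" using convexD[OF K p u] True r by simp
  moreover have "(1 - r) *\<^sub>R p + r *\<^sub>R u = x"
    using h by (simp add: algebra_simps)
  ultimately show ?thesis by simp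
next
  case False
  have "(1 - 1/r) *\<^sub>R (p - t) + (1/r) *\<^sub>R (x - t) \<in> K" using convexD[OF K pt x] False r by simp
  moreover have "(1 - 1/r) *\<^sub>R (p - t) + (1/r) *\<^sub>R (x - t) = u - t"
  proof -
    have hx: "x = p + r *\<^sub>R (u - p)" using h by (metis add.commute diff_add_cancel)
    have rr: "(1/r) * r = 1" using r by simp
    show ?thesis unfolding hx using r by (simp add: algebra_simps rr)
  qed
  ultimately show ?thesis by simp
qed

lemma seg_param:
  fixes u v p :: "real \<times> real"
  assumes "p \<in> closed_segment u v" "p \<noteq> u" "p \<noteq> v"
  obtains c where "c > 0" "v - p = - c *\<^sub>R (u - p)" "u \<noteq> p"
proof -
  obtain l where l: "0 \<le> l" "l \<le> 1" "p = (1 - l) *\<^sub>R u + l *\<^sub>R v"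
    using assms(1) unfolding closed_segment_def by blast
  have l0: "l \<noteq> 0" using l assms(2) by auto
  have l1: "l \<noteq> 1" using l assms(3) by auto
  define c where "c = (1 - l) / l"
  have c: "c > 0" unfolding c_def using l l0 l1 by simp
  have e1: "u - p = l *\<^sub>R (u - v)" using l(3) by (simp add: algebra_simps)
  have e2: "v - p = (1 - l) *\<^sub>R (v - u)" using l(3) by (simp add: algebra_simps)
  have "- c *\<^sub>R (u - p) = - (c * l) *\<^sub>R (u - v)" unfolding e1 by simp
  also have "c * l = 1 - l" unfolding c_def using l0 by simp
  finally have "v - p = - c *\<^sub>R (u - p)" unfolding e2 by (simp add: algebra_simps)
  then show ?thesis using that c assms(2) by blast
qed

lemma key:
  fixes u v x y t p :: "real \<times> real"
  assumes K: "convex K" and u: "u \<in> K" and v: "v \<in> K" and x: "x - t \<in> K" and y: "y - t \<in> K"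
    and p1: "p \<in> closed_segment u v" and p2: "p \<in> closed_segment x y"
  shows "x \<in> K \<or> y \<in> K \<or> u - t \<in> K \<or> v - t \<in> K"
proof -
  have pK: "p \<in> K" using closed_segment_subset[OF u v K] p1 by blast
  have ptK: "p - t \<in> K"
  proof -
    obtain l where l: "0 \<le> l" "l \<le> 1" "p = (1 - l) *\<^sub>R x + l *\<^sub>R y"
      using p2 unfolding closed_segment_def by blast
    have "(1 - l) *\<^sub>R (x - t) + l *\<^sub>R (y - t) \<in> K" using convexD[OF K x y] l by simp
    moreover have "(1 - l) *\<^sub>R (x - t) + l *\<^sub>R (y - t) = p - t" using l(3) by (simp add: algebra_simps)
    ultimately show ?thesis by simp
  qed
  show ?thesis
  proof (cases "p = u \<or> p = v \<or> p = x \<or> p = y")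
    case True
    then show ?thesis using ptK pK by auto
  next
    case False
    then obtain c where c: "c > 0" "v - p = - c *\<^sub>R (u - p)" "u \<noteq> p"
      using seg_param[OF p1] by blast
    obtain k where k: "k > 0" "y - p = - k *\<^sub>R (x - p)" "x \<noteq> p"
      using seg_param[OF p2] False by blast
    have c': "u - p = - (1/c) *\<^sub>R (v - p)" using c by simp
    have k': "x - p = - (1/k) *\<^sub>R (y - p)" using k by simp
    define U where "U = u - p"
    define X where "X = x - p"
    have U0: "U \<noteq> 0" "x - p = X" "u - p = U" using c k unfolding U_def X_def by auto
    have X0: "X \<noteq> 0" using k unfolding X_def by auto
    define det where "det = fst X * snd U - snd X * fst U"
    show ?thesis
    proof (cases "det = 0")
      case False
      define a where "a = (fst t * snd U - snd t * fst U) / det"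
      define b where "b = (fst X * snd t - snd X * fst t) / det"
      have f1: "a * fst X + b * fst U = ((fst t * snd U - snd t * fst U) * fst X + (fst X * snd t - snd X * fst t) * fst U) / det"
        unfolding a_def b_def using False by (simp add: field_simps)
      also have "(fst t * snd U - snd t * fst U) * fst X + (fst X * snd t - snd X * fst t) * fst U = fst t * det"
        unfolding det_def by algebra
      finally have f1: "a * fst X + b * fst U = fst t" using False by simp
      have f2: "a * snd X + b * snd U = ((fst t * snd U - snd t * fst U) * snd X + (fst X * snd t - snd X * fst t) * snd U) / det"
        unfolding a_def b_def using False by (simp add: field_simps)
      also have "(fst t * snd U - snd t * fst U) * snd X + (fst X * snd t - snd X * fst t) * snd U = snd t * det"
        unfolding det_def by algebra
      finally have f2: "a * snd X + b * snd U = snd t" using False by simp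
      have tab: "t = a *\<^sub>R (x - p) + b *\<^sub>R (u - p)"
        unfolding U0 using f1 f2 by (simp add: prod_eq_iff)
      consider "a \<ge> 0" "b \<ge> 0" | "a \<ge> 0" "b < 0" | "a < 0" "b \<ge> 0" | "a < 0" "b < 0" by linarith
      then show ?thesis
      proof cases
        case 1
        then show ?thesis using core2[OF K u v x y c(2) k(2) c(1) k(1) tab] by blast
      next
        case 2
        have "t = a *\<^sub>R (x - p) + (- b / c) *\<^sub>R (v - p)" using tab c by simp
        moreover have "0 < 1 / c" "0 \<le> - b / c" using c 2 by (auto simp: divide_nonpos_pos)
        ultimately show ?thesis using core2[OF K v u x y c' k(2) _ k(1)] 2 by blast
      next
        case 3
        have "t = (- a / k) *\<^sub>R (y - p) + b *\<^sub>R (u - p)" using tab k by simp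
        moreover have "0 < 1 / k" "0 \<le> - a / k" using k 3 by (auto simp: divide_nonpos_pos)
        ultimately show ?thesis using core2[OF K u v y x c(2) k' c(1)] 3 by blast
      next
        case 4
        have "t = (- a / k) *\<^sub>R (y - p) + (- b / c) *\<^sub>R (v - p)" using tab k c by simp
        moreover have "0 < 1 / k" "0 \<le> - a / k" "0 < 1 / c" "0 \<le> - b / c" using k c 4 by (auto simp: divide_nonpos_pos)
        ultimately show ?thesis using core2[OF K v u y x c' k'] by blast
      qed
    next
      case True
      obtain r where r: "x - p = r *\<^sub>R (u - p)"
      proof (cases "fst U = 0")
        case True
        then have "snd U \<noteq> 0" using U0 by (simp add: prod_eq_iff)
        moreover have "fst X = 0" using \<open>det = 0\<close> True \<open>snd U \<noteq> 0\<close> unfolding det_def by simp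
        ultimately have "X = (snd X / snd U) *\<^sub>R U" using True by (simp add: prod_eq_iff)
        then show ?thesis using that U0 by metis
      next
        case False
        have "snd X = (fst X / fst U) * snd U" using \<open>det = 0\<close> False unfolding det_def
          by (simp add: field_simps)
        then have "X = (fst X / fst U) *\<^sub>R U" using False by (simp add: prod_eq_iff)
        then show ?thesis using that U0 by metis
      qed
      have r0: "r \<noteq> 0" using r X0 U0 by auto
      show ?thesis
      proof (cases "r > 0")
        case True
        then show ?thesis using col[OF K pK ptK u x r] by blast
      next
        case False
        then have rn: "r < 0" using r0 by simp
        have "- r / c > 0" using rn c(1) by (simp add: divide_neg_pos)
        moreover have "x - p = (- r / c) *\<^sub>R (v - p)" using r c by auto
        ultimately have "x - p = (- r / c) *\<^sub>R (v - p)" "- r / c > 0" by auto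
        then show ?thesis using col[OF K pK ptK v x] by blast
      qed
    qed
  qed
qed

lemma conv_tr:
  fixes C :: "(real \<times> real) set"
  assumes "convex C" shows "convex ((\<lambda>x. x + w) ` C)"
proof -
  have "(\<lambda>x. x + w) ` C = (+) w ` C" by (rule image_cong) (auto simp: add.commute)
  then show ?thesis using convex_translation[OF assms] by simp
qed

lemma mem_tr: "z \<in> (\<lambda>x. x + w) ` C \<longleftrightarrow> z - (w::real\<times>real) \<in> C"
  by (auto simp: image_iff intro: bexI[of _ "z - w"])

lemma share:
  fixes a b d q :: "real \<times> real"
  assumes "q \<in> closed_segment a b" "q \<in> closed_segment a d"
    "b \<notin> closed_segment a d" "d \<notin> closed_segment a b"
  shows "q = a"
proof (rule ccontr)
  assume nq: "q \<noteq> a"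
  obtain s where s: "0 \<le> s" "s \<le> 1" "q = (1 - s) *\<^sub>R a + s *\<^sub>R b"
    using assms(1) unfolding closed_segment_def by blast
  obtain r where r: "0 \<le> r" "r \<le> 1" "q = (1 - r) *\<^sub>R a + r *\<^sub>R d"
    using assms(2) unfolding closed_segment_def by blast
  have s0: "s > 0" using s nq by (cases "s = 0") auto
  have r0: "r > 0" using r nq by (cases "r = 0") auto
  have eq: "s *\<^sub>R (b - a) = r *\<^sub>R (d - a)" using s(3) r(3) by (simp add: algebra_simps)
  show False
  proof (cases "r \<le> s")
    case True
    have "b - a = (r / s) *\<^sub>R (d - a)"
      using arg_cong[OF eq, of "\<lambda>z. (1/s) *\<^sub>R z"] s0 by simp
    then have "b = (1 - r/s) *\<^sub>R a + (r/s) *\<^sub>R d" by (simp add: algebra_simps)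
    moreover have "0 \<le> r/s" "r/s \<le> 1" using True s0 r0 by auto
    ultimately have "b \<in> closed_segment a d" unfolding closed_segment_def by blast
    then show False using assms(3) by simp
  next
    case False
    have "d - a = (s / r) *\<^sub>R (b - a)"
      using arg_cong[OF eq, of "\<lambda>z. (1/r) *\<^sub>R z"] r0 by simp
    then have "d = (1 - s/r) *\<^sub>R a + (s/r) *\<^sub>R b" by (simp add: algebra_simps)
    moreover have "0 \<le> s/r" "s/r \<le> 1" using False s0 r0 by auto
    ultimately have "d \<in> closed_segment a b" unfolding closed_segment_def by blast
    then show False using assms(4) by simp
  qed
qed

lemma part1:
  fixes C P :: "(real \<times> real) set"
  assumes C: "convex C" and E: "translate_adj P C u v" and z: "z \<in> P" "z \<noteq> u" "z \<noteq> v"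
  shows "z \<notin> closed_segment u v"
proof
  assume zs: "z \<in> closed_segment u v"
  obtain w where w: "P \<inter> ((\<lambda>x. x + w) ` C) = {u, v}" using E unfolding translate_adj_def by blast
  have "u \<in> (\<lambda>x. x + w) ` C" "v \<in> (\<lambda>x. x + w) ` C" using w by auto
  then have "z \<in> (\<lambda>x. x + w) ` C" using closed_segment_subset[OF _ _ conv_tr[OF C]] zs by blast
  then show False using w z by auto
qed

theorem mainTheorem1:
  fixes C P :: "(real \<times> real) set"
  assumes "convex C" and "finite P"
  shows "plane_straight_line P (translate_adj P C)"
  unfolding plane_straight_line_def
proof (intro conjI allI impI)
  fix u v z assume "translate_adj P C u v \<and> z \<in> P \<and> z \<noteq> u \<and> z \<noteq> v"
  then show "z \<notin> closed_segment u v" using part1[OF assms(1)] by blast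
next
  fix u v x y
  assume H: "translate_adj P C u v \<and> translate_adj P C x y \<and> {u, v} \<noteq> {x, y}"
  then have E1: "translate_adj P C u v" and E2: "translate_adj P C x y" and ne: "{u, v} \<noteq> {x, y}" by auto
  obtain w1 where w1: "P \<inter> ((\<lambda>z. z + w1) ` C) = {u, v}" using E1 unfolding translate_adj_def by blast
  obtain w2 where w2: "P \<inter> ((\<lambda>z. z + w2) ` C) = {x, y}" using E2 unfolding translate_adj_def by blast
  have P: "u \<in> P" "v \<in> P" "x \<in> P" "y \<in> P" "u \<noteq> v" "x \<noteq> y"
    using E1 E2 unfolding translate_adj_def by auto
  define K where "K = (\<lambda>z. z + w1) ` C"
  define t where "t = w2 - w1"
  have K: "convex K" unfolding K_def using conv_tr[OF assms(1)] .
  have inK: "\<And>z. z \<in> P \<Longrightarrow> z \<in> K \<longleftrightarrow> z \<in> {u, v}" using w1 unfolding K_def by auto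
  have inL: "\<And>z. z \<in> P \<Longrightarrow> z - t \<in> K \<longleftrightarrow> z \<in> {x, y}"
  proof -
    fix z assume "z \<in> P"
    have "z - t \<in> K \<longleftrightarrow> z \<in> (\<lambda>z. z + w2) ` C" unfolding K_def mem_tr t_def
      by (simp add: algebra_simps)
    then show "z - t \<in> K \<longleftrightarrow> z \<in> {x, y}" using w2 \<open>z \<in> P\<close> by blast
  qed
  have nseg: "\<And>a b z. translate_adj P C a b \<Longrightarrow> z \<in> P \<Longrightarrow> z \<noteq> a \<Longrightarrow> z \<noteq> b \<Longrightarrow> z \<notin> closed_segment a b"
    using part1[OF assms(1)] by blast
  show "closed_segment u v \<inter> closed_segment x y \<subseteq> {u, v} \<inter> {x, y}"
  proof
    fix q assume q: "q \<in> closed_segment u v \<inter> closed_segment x y"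
    then have q1: "q \<in> closed_segment u v" and q2: "q \<in> closed_segment x y" by auto
    show "q \<in> {u, v} \<inter> {x, y}"
    proof (cases "u \<in> {x, y} \<or> v \<in> {x, y}")
      case False
      have "x \<notin> K" "y \<notin> K" "u - t \<notin> K" "v - t \<notin> K"
        using inK inL P False by auto
      moreover have "u \<in> K" "v \<in> K" "x - t \<in> K" "y - t \<in> K" using inK inL P by auto
      ultimately show ?thesis using key[OF K _ _ _ _ q1 q2] by blast
    next
      case True
      then consider "u = x" | "u = y" | "v = x" | "v = y" by auto
      then show ?thesis
      proof cases
        case 1
        then have vy: "v \<noteq> y" using ne by auto
        have "q = u"
          apply (rule share[of q u v y])
          using q1 q2 1 nseg[OF E1, of y] nseg[OF E2, of v] vy P by auto
        then show ?thesis using 1 by simp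
      next
        case 2
        then have vx: "v \<noteq> x" using ne by auto
        have "q = u"
          apply (rule share[of q u v x])
          using q1 q2 2 nseg[OF E1, of x] nseg[OF E2, of v] vx P by (auto simp: closed_segment_commute)
        then show ?thesis using 2 by simp
      next
        case 3
        then have uy: "u \<noteq> y" using ne by auto
        have "q = v"
          apply (rule share[of q v u y])
          using q1 q2 3 nseg[OF E1, of y] nseg[OF E2, of u] uy P by (auto simp: closed_segment_commute)
        then show ?thesis using 3 by simp
      next
        case 4
        then have ux: "u \<noteq> x" using ne by auto
        have "q = v"
          apply (rule share[of q v u x])
          using q1 q2 4 nseg[OF E1, of x] nseg[OF E2, of u] ux P by (auto simp: closed_segment_commute)
        then show ?thesis using 4 by simp
      qed
    qed
  qed
qed

end
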